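(* Let $\mathcal B$ be finite, $\eta>0$, $B_A>0$, and let $A,\tilde A\in\mathbb R^{\mathcal B}$ satisfy $\|A\|_\infty\le B_A$, $\|\tilde A\|_\infty\le B_A$ and be such that $\nu=\exp(\eta A)$ and $\tilde\nu=\exp(\eta\tilde A)$ are probability vectors on $\mathcal B$. Let ${\rm H}=\mathrm{diag}(\tilde\nu)-\tilde\nu\tilde\nu^\top$ and ${\rm L}=\mathrm{diag}(\nu)-\nu\nu^\top$. Then for every $g\in\mathbb R^{\mathcal B}$, $$e^{2\eta B_A}\,g^\top{\rm L}g\ \ge\ g^\top{\rm H}g\ \ge\ e^{-2\eta B_A}\,g^\top{\rm L}g.$$ *)

theory Defs
  imports "HOL-Analysis.Analysis"
begin

definition cov_matrix :: "('b \<Rightarrow> real) \<Rightarrow> 'b \<Rightarrow> 'b \<Rightarrow> real" where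
  "cov_matrix nu i j = (if i = j then nu i else 0) - nu i * nu j"

definition quad_form :: "('b::finite \<Rightarrow> 'b \<Rightarrow> real) \<Rightarrow> ('b \<Rightarrow> real) \<Rightarrow> real" where
  "quad_form M g = (\<Sum>i\<in>UNIV. \<Sum>j\<in>UNIV. g i * M i j * g j)"

definition sup_norm :: "('b::finite \<Rightarrow> real) \<Rightarrow> real" where
  "sup_norm A = Max (range (\<lambda>b. \<bar>A b\<bar>))"

definition prob_vector :: "('b::finite \<Rightarrow> real) \<Rightarrow> bool" where
  "prob_vector nu \<longleftrightarrow> (\<forall>b. 0 \<le> nu b) \<and> (\<Sum>b\<in>UNIV. nu b) = 1"

end

theory Submission
  imports Defs
begin

lemma qf_eq:
  fixes p g :: "'b::finite \<Rightarrow> real"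
  shows "quad_form (cov_matrix p) g = (\<Sum>i\<in>UNIV. p i * (g i)^2) - (\<Sum>i\<in>UNIV. p i * g i)^2"
proof -
  have "quad_form (cov_matrix p) g =
     (\<Sum>i\<in>UNIV. \<Sum>j\<in>UNIV. (if i = j then g i * p i * g j else 0)) - (\<Sum>i\<in>UNIV. \<Sum>j\<in>UNIV. (p i * g i) * (p j * g j))"
    unfolding quad_form_def cov_matrix_def sum_subtractf[symmetric]
    by (intro sum.cong refl) (auto simp: algebra_simps)
  also have "(\<Sum>i\<in>UNIV. \<Sum>j\<in>UNIV. (if i = j then g i * p i * g j else 0)) = (\<Sum>i\<in>UNIV. p i * (g i)^2)"
    by (simp add: power2_eq_square algebra_simps)
  also have "(\<Sum>i\<in>UNIV. \<Sum>j\<in>UNIV. (p i * g i) * (p j * g j)) = (\<Sum>i\<in>UNIV. p i * g i)^2"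
    by (simp add: power2_eq_square sum_product)
  finally show ?thesis .
qed

lemma qf_shift:
  fixes p g :: "'b::finite \<Rightarrow> real"
  assumes "prob_vector p"
  shows "quad_form (cov_matrix p) g + ((\<Sum>i\<in>UNIV. p i * g i) - c)^2 = (\<Sum>i\<in>UNIV. p i * (g i - c)^2)"
proof -
  have s: "(\<Sum>i\<in>UNIV. p i) = 1" using assms by (simp add: prob_vector_def)
  have "(\<Sum>i\<in>UNIV. p i * (g i - c)^2) = (\<Sum>i\<in>UNIV. p i * (g i)^2) - 2 * c * (\<Sum>i\<in>UNIV. p i * g i) + c^2 * (\<Sum>i\<in>UNIV. p i)"
    by (simp add: power2_eq_square algebra_simps sum.distrib sum_subtractf sum_distrib_left)
  then show ?thesis using s by (simp add: qf_eq power2_eq_square algebra_simps)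
qed

lemma qf_compare:
  fixes p q g :: "'b::finite \<Rightarrow> real"
  assumes "prob_vector p" "prob_vector q" "\<And>i. q i \<le> K * p i"
  shows "quad_form (cov_matrix q) g \<le> K * quad_form (cov_matrix p) g"
proof -
  define m where "m = (\<Sum>i\<in>UNIV. p i * g i)"
  have "quad_form (cov_matrix q) g \<le> quad_form (cov_matrix q) g + ((\<Sum>i\<in>UNIV. q i * g i) - m)^2"
    by simp
  also have "\<dots> = (\<Sum>i\<in>UNIV. q i * (g i - m)^2)" by (rule qf_shift[OF assms(2)])
  also have "\<dots> \<le> (\<Sum>i\<in>UNIV. K * p i * (g i - m)^2)"
    by (rule sum_mono) (simp add: assms(3) mult_right_mono)
  also have "\<dots> = K * (\<Sum>i\<in>UNIV. p i * (g i - m)^2)"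
    by (simp add: sum_distrib_left mult.assoc)
  also have "(\<Sum>i\<in>UNIV. p i * (g i - m)^2) = quad_form (cov_matrix p) g"
    using qf_shift[OF assms(1), of g m] by (simp add: m_def)
  finally show ?thesis .
qed

lemma abs_le_sup:
  fixes A :: "'b::finite \<Rightarrow> real"
  shows "\<bar>A b\<bar> \<le> sup_norm A"
  unfolding sup_norm_def by (rule Max_ge) auto

lemma ratio:
  fixes A At :: "'b::finite \<Rightarrow> real"
  assumes "eta > 0" "sup_norm A \<le> BA" "sup_norm At \<le> BA"
  shows "exp (eta * At b) \<le> exp (2 * eta * BA) * exp (eta * A b)"
proof -
  have a: "\<bar>A b\<bar> \<le> BA" "\<bar>At b\<bar> \<le> BA" using abs_le_sup assms order_trans by blast+
  have "eta * At b \<le> 2 * eta * BA + eta * A b"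
  proof -
    have "At b - A b \<le> 2 * BA" using a by linarith
    then have "eta * (At b - A b) \<le> eta * (2 * BA)" using assms(1) by (intro mult_left_mono) auto
    then show ?thesis by (simp add: algebra_simps)
  qed
  then show ?thesis by (simp add: exp_add[symmetric])
qed

theorem mainTheorem9:
  fixes A At g :: "'b::finite \<Rightarrow> real" and eta BA :: real
  assumes "eta > 0" and "BA > 0"
    and "sup_norm A \<le> BA" and "sup_norm At \<le> BA"
    and "prob_vector (\<lambda>b. exp (eta * A b))"
    and "prob_vector (\<lambda>b. exp (eta * At b))"
  shows "exp (2 * eta * BA) * quad_form (cov_matrix (\<lambda>b. exp (eta * A b))) g
           \<ge> quad_form (cov_matrix (\<lambda>b. exp (eta * At b))) g
       \<and> quad_form (cov_matrix (\<lambda>b. exp (eta * At b))) g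
           \<ge> exp (- 2 * eta * BA) * quad_form (cov_matrix (\<lambda>b. exp (eta * A b))) g"
proof
  show "exp (2 * eta * BA) * quad_form (cov_matrix (\<lambda>b. exp (eta * A b))) g
           \<ge> quad_form (cov_matrix (\<lambda>b. exp (eta * At b))) g"
    by (rule qf_compare[OF assms(5,6)]) (rule ratio[OF assms(1,3,4)])
  have "quad_form (cov_matrix (\<lambda>b. exp (eta * A b))) g \<le> exp (2 * eta * BA) * quad_form (cov_matrix (\<lambda>b. exp (eta * At b))) g"
    by (rule qf_compare[OF assms(6,5)]) (rule ratio[OF assms(1,4,3)])
  then have "exp (- 2 * eta * BA) * quad_form (cov_matrix (\<lambda>b. exp (eta * A b))) g
     \<le> exp (- 2 * eta * BA) * (exp (2 * eta * BA) * quad_form (cov_matrix (\<lambda>b. exp (eta * At b))) g)"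
    by (intro mult_left_mono) auto
  also have "\<dots> = quad_form (cov_matrix (\<lambda>b. exp (eta * At b))) g"
    by (simp add: mult.assoc[symmetric] exp_add[symmetric])
  finally show "quad_form (cov_matrix (\<lambda>b. exp (eta * At b))) g
           \<ge> exp (- 2 * eta * BA) * quad_form (cov_matrix (\<lambda>b. exp (eta * A b))) g" .
qed

end
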